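(* In the setting below, if $\mu$ and $\nu$ are two $\sigma$-invariant Borel probability measures on $X$ with $p(\mu)=p(\nu)$, then $\mu(A)=\nu(A)$ for every $A\in\mathcal{P}_n$ and every $n\in\mathbb{N}$.
   Context: Setting: $G$ is a countable residually finite group, $r>1$; $(\Gamma_i)_{i\ge1}$ is a strictly decreasing sequence of finite index normal subgroups of $G$ with $\bigcap_i\Gamma_i=\{1_G\}$, $\Gamma_0=G$; $(D_i)_{i\ge0}$ are finite subsets with $D_0=\{1_G\}$, $D_i$ containing exactly one element of each coset of $\Gamma_i$, $1_G\in D_i\subseteq D_{i+1}$, $G=\bigcup_iD_i$, $D_j=\bigcup_{v\in D_j\cap\Gamma_i}vD_i$ for $j>i\ge1$, and $[G:\Gamma_i],[\Gamma_i:\Gamma_{i+1}]\ge3$. $\Sigma=\{1,\dots,r\}$, $\alpha_m\in\Sigma$ with $\alpha_m\equiv m\pmod r$. $J(0)=\{1_G\}$, $J(m)=D_m\setminus\bigcup_{i<m}J(i)\Gamma_{i+1}$; $\eta(hg)=\alpha_{m+1}$ for $h\in J(m)$, $g\in\Gamma_{m+1}$; $X=\overline{\{\sigma^g\eta\}}$ with $\sigma^gx(h)=x(g^{-1}h)$. $\mathrm{Per}(x,\Gamma,\alpha)=\{g:x(\gamma g)=\alpha\ \forall\gamma\in\Gamma\}$. For $n\ge1$: $C_n=\{x\in X:\mathrm{Per}(x,\Gamma_n,\alpha)=\mathrm{Per}(\eta,\Gamma_n,\alpha)\ \forall\alpha\in\Sigma\}$, $C_{n,i}=\{x\in C_n: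 x(g)=i\ \forall g\in J(n)\}$, and $\mathcal{P}_n=\{\sigma^{v^{-1}}C_{n,i}:1\le i\le r,\ v\in D_n\}$ (a clopen partition of $X$). $p(\mu)=(\mu(\{x\in X:x(1_G)=1\}),\dots,\mu(\{x\in X:x(1_G)=r\}))$. *)

theory Defs
  imports "HOL-Probability.Probability"
begin

text \<open>The group G is a type of class group_add (the group operation is written
  additively, it is NOT assumed commutative); 1_G is 0, g^{-1} is -g, gh is g + h.\<close>

definition subgroup_add :: "'g::group_add set \<Rightarrow> bool" where
  "subgroup_add H \<longleftrightarrow> 0 \<in> H \<and> (\<forall>a\<in>H. \<forall>b\<in>H. a + b \<in> H) \<and> (\<forall>a\<in>H. - a \<in> H)"

definition normal_subgroup_add :: "'g::group_add set \<Rightarrow> bool" where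
  "normal_subgroup_add H \<longleftrightarrow> subgroup_add H \<and> (\<forall>g. \<forall>h\<in>H. g + h + - g \<in> H)"

definition lcoset :: "'g::group_add \<Rightarrow> 'g set \<Rightarrow> 'g set" where
  "lcoset g H = (\<lambda>h. g + h) ` H"

text \<open>Index [K : H] (number of left cosets gH with g in K); 0 if infinite.\<close>
definition sub_index :: "'g::group_add set \<Rightarrow> 'g set \<Rightarrow> nat" where
  "sub_index K H = card {lcoset g H | g. g \<in> K}"

definition alpha :: "nat \<Rightarrow> nat \<Rightarrow> nat" where
  "alpha r m = (if m mod r = 0 then r else m mod r)"

fun J :: "(nat \<Rightarrow> 'g::group_add set) \<Rightarrow> (nat \<Rightarrow> 'g set) \<Rightarrow> nat \<Rightarrow> 'g set" where
  "J \<Gamma> D m = (if m = 0 then {0} else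
      D m - (\<Union>i\<in>{..<m}. \<Union>h\<in>J \<Gamma> D i. lcoset h (\<Gamma> (Suc i))))"

definition eta :: "nat \<Rightarrow> (nat \<Rightarrow> 'g::group_add set) \<Rightarrow> (nat \<Rightarrow> 'g set) \<Rightarrow> 'g \<Rightarrow> nat" where
  "eta r \<Gamma> D x = alpha r (Suc (LEAST m. \<exists>h\<in>J \<Gamma> D m. \<exists>g\<in>\<Gamma> (Suc m). x = h + g))"

definition shift :: "'g::group_add \<Rightarrow> ('g \<Rightarrow> 'a) \<Rightarrow> ('g \<Rightarrow> 'a)" where
  "shift g x = (\<lambda>h. x (- g + h))"

text \<open>X: orbit closure of eta in the product topology on G -> nat (nat discrete).\<close>
definition Xsp :: "nat \<Rightarrow> (nat \<Rightarrow> 'g::group_add set) \<Rightarrow> (nat \<Rightarrow> 'g set) \<Rightarrow> ('g \<Rightarrow> nat) set" where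
  "Xsp r \<Gamma> D = closure (range (\<lambda>g. shift g (eta r \<Gamma> D)))"

definition Per :: "('g::group_add \<Rightarrow> nat) \<Rightarrow> 'g set \<Rightarrow> nat \<Rightarrow> 'g set" where
  "Per x H a = {g. \<forall>\<gamma>\<in>H. x (\<gamma> + g) = a}"

definition Cn :: "nat \<Rightarrow> (nat \<Rightarrow> 'g::group_add set) \<Rightarrow> (nat \<Rightarrow> 'g set) \<Rightarrow> nat \<Rightarrow> ('g \<Rightarrow> nat) set" where
  "Cn r \<Gamma> D n = {x \<in> Xsp r \<Gamma> D. \<forall>a\<in>{1..r}. Per x (\<Gamma> n) a = Per (eta r \<Gamma> D) (\<Gamma> n) a}"

definition Cni :: "nat \<Rightarrow> (nat \<Rightarrow> 'g::group_add set) \<Rightarrow> (nat \<Rightarrow> 'g set) \<Rightarrow> nat \<Rightarrow> nat \<Rightarrow> ('g \<Rightarrow> nat) set" where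
  "Cni r \<Gamma> D n i = {x \<in> Cn r \<Gamma> D n. \<forall>g\<in>J \<Gamma> D n. x g = i}"

definition Pn :: "nat \<Rightarrow> (nat \<Rightarrow> 'g::group_add set) \<Rightarrow> (nat \<Rightarrow> 'g set) \<Rightarrow> nat \<Rightarrow> ('g \<Rightarrow> nat) set set" where
  "Pn r \<Gamma> D n = {shift (- v) ` Cni r \<Gamma> D n i | i v. i \<in> {1..r} \<and> v \<in> D n}"

end

theory Submission
  imports Defs
begin

declare add_uminus_conv_diff[simp del]

lemma shift_add: "shift a (shift b z) = shift (a + b) z"
  unfolding shift_def by (simp add: minus_add add.assoc)

locale toep =
  fixes r :: nat and \<Gamma> D :: "nat \<Rightarrow> 'g::{group_add,countable} set"
  assumes r: "r > 1"
  and sg: "\<And>i. subgroup_add (\<Gamma> i)"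
  and nrm: "\<And>i g h. h \<in> \<Gamma> i \<Longrightarrow> g + h + - g \<in> \<Gamma> i"
  and G_0: "\<Gamma> 0 = UNIV"
  and mono: "\<And>i. \<Gamma> (Suc i) \<subseteq> \<Gamma> i"
  and strict: "\<And>i. \<Gamma> (Suc i) \<noteq> \<Gamma> i"
  and D0: "D 0 = {0}"
  and Dfin: "\<And>i. finite (D i)"
  and Dtr: "\<And>i g. \<exists>!d. d \<in> D i \<and> d \<in> lcoset g (\<Gamma> i)"
  and Done: "\<And>i. 0 \<in> D i"
  and Dnested: "\<And>i j. 1 \<le> i \<Longrightarrow> i < j \<Longrightarrow> D j = (\<Union>v\<in>D j \<inter> \<Gamma> i. (\<lambda>d. v + d) ` D i)"
begin

lemma G0[simp]: "0 \<in> \<Gamma> i" using sg[of i] by (simp add: subgroup_add_def)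
lemma Gadd[intro]: "a \<in> \<Gamma> i \<Longrightarrow> b \<in> \<Gamma> i \<Longrightarrow> a + b \<in> \<Gamma> i"
  using sg[of i] by (simp add: subgroup_add_def)
lemma Gneg[simp]: "- a \<in> \<Gamma> i \<longleftrightarrow> a \<in> \<Gamma> i"
  using sg[of i] unfolding subgroup_add_def by (metis minus_minus)
lemma Gdiff[intro]: "a \<in> \<Gamma> i \<Longrightarrow> b \<in> \<Gamma> i \<Longrightarrow> a + - b \<in> \<Gamma> i"
  by (intro Gadd) auto
lemma Gconj[simp]: "g + h + - g \<in> \<Gamma> i \<longleftrightarrow> h \<in> \<Gamma> i"
proof
  assume "g + h + - g \<in> \<Gamma> i"
  then have "- g + (g + h + - g) + - (- g) \<in> \<Gamma> i" by (rule nrm)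
  then show "h \<in> \<Gamma> i" by (simp add: add.assoc)
qed (rule nrm)
lemma Gconj'[simp]: "- g + h + g \<in> \<Gamma> i \<longleftrightarrow> h \<in> \<Gamma> i"
  using Gconj[of "-g" h i] by simp
lemma Gmono: "i \<le> j \<Longrightarrow> \<Gamma> j \<subseteq> \<Gamma> i"
  by (induction j rule: dec_induct) (use mono in auto)
lemma GmonoE: "x \<in> \<Gamma> j \<Longrightarrow> i \<le> j \<Longrightarrow> x \<in> \<Gamma> i"
  using Gmono by blast
lemma Gstrict: "\<exists>\<gamma>\<in>\<Gamma> i. \<gamma> \<notin> \<Gamma> (Suc i)"
  using mono[of i] strict[of i] by blast

lemma rep: "\<exists>d\<in>D i. \<exists>\<gamma>\<in>\<Gamma> i. d = x + \<gamma>"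
  using Dtr[of i x] unfolding lcoset_def by blast
lemma uniq: "d \<in> D i \<Longrightarrow> d' \<in> D i \<Longrightarrow> - d + d' \<in> \<Gamma> i \<Longrightarrow> d = d'"
proof -
  assume a: "d \<in> D i" "d' \<in> D i" "- d + d' \<in> \<Gamma> i"
  have "d \<in> lcoset d (\<Gamma> i)" unfolding lcoset_def by (auto intro: image_eqI[of _ _ 0])
  moreover have "d' \<in> lcoset d (\<Gamma> i)" unfolding lcoset_def
    using a by (auto intro: image_eqI[of _ _ "- d + d'"])
  ultimately show ?thesis using Dtr[of i d] a by blast
qed

definition L where "L m = {x. \<exists>h\<in>J \<Gamma> D m. \<exists>g\<in>\<Gamma> (Suc m). x = h + g}"
definition U where "U m = {x. \<exists>j<m. x \<in> L j}"
definition H where "H m = {x. \<exists>h\<in>J \<Gamma> D m. \<exists>g\<in>\<Gamma> m. x = h + g}"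
abbreviation "et \<equiv> eta r \<Gamma> D"

declare J.simps[simp del]

lemma J_eq: "J \<Gamma> D m = D m - U m"
proof (cases "m = 0")
  case True then show ?thesis by (simp add: J.simps D0 U_def)
next
  case False
  have "(\<Union>i\<in>{..<m}. \<Union>h\<in>J \<Gamma> D i. lcoset h (\<Gamma> (Suc i))) = U m"
    unfolding U_def L_def lcoset_def by auto
  then show ?thesis using False by (simp add: J.simps[of \<Gamma> D m])
qed

lemma J_D: "h \<in> J \<Gamma> D m \<Longrightarrow> h \<in> D m" using J_eq by auto
lemma J_notU: "h \<in> J \<Gamma> D m \<Longrightarrow> h \<notin> U m" using J_eq by auto
lemma J_L: "h \<in> J \<Gamma> D m \<Longrightarrow> h \<in> L m" unfolding L_def by (rule CollectI, rule bexI[of _ h], rule bexI[of _ 0]) auto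
lemma J_H: "h \<in> J \<Gamma> D m \<Longrightarrow> h \<in> H m" unfolding H_def by (rule CollectI, rule bexI[of _ h], rule bexI[of _ 0]) auto

lemma L_rinv: "x \<in> L j \<Longrightarrow> \<gamma> \<in> \<Gamma> (Suc j) \<Longrightarrow> x + \<gamma> \<in> L j"
  unfolding L_def by (auto simp: add.assoc intro!: Gadd) (metis Gadd add.assoc)
lemma L_linv: "x \<in> L j \<Longrightarrow> \<gamma> \<in> \<Gamma> (Suc j) \<Longrightarrow> \<gamma> + x \<in> L j"
proof -
  assume "x \<in> L j" "\<gamma> \<in> \<Gamma> (Suc j)"
  then obtain h g where hg: "h \<in> J \<Gamma> D j" "g \<in> \<Gamma> (Suc j)" "x = h + g" unfolding L_def by auto
  have "\<gamma> + x = h + ((- h + \<gamma> + h) + g)" using hg by (simp add: add.assoc)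
  moreover have "(- h + \<gamma> + h) + g \<in> \<Gamma> (Suc j)" using hg \<open>\<gamma> \<in> _\<close> by auto
  ultimately show ?thesis using hg unfolding L_def by blast
qed

lemma U_rinv: "x \<in> U m \<Longrightarrow> \<gamma> \<in> \<Gamma> m \<Longrightarrow> x + \<gamma> \<in> U m"
  unfolding U_def using L_rinv GmonoE by (smt (verit) Suc_leI mem_Collect_eq)
lemma U_linv: "x \<in> U m \<Longrightarrow> \<gamma> \<in> \<Gamma> m \<Longrightarrow> \<gamma> + x \<in> U m"
  unfolding U_def using L_linv GmonoE by (smt (verit) Suc_leI mem_Collect_eq)

lemma L_sub_U: "j < m \<Longrightarrow> L j \<subseteq> U m" unfolding U_def by auto

lemma L_disj: "x \<in> L m \<Longrightarrow> x \<in> L j \<Longrightarrow> j < m \<Longrightarrow> False"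
proof -
  assume a: "x \<in> L m" "x \<in> L j" "j < m"
  then obtain h g where hg: "h \<in> J \<Gamma> D m" "g \<in> \<Gamma> (Suc m)" "x = h + g" unfolding L_def by auto
  have "x \<in> U m" using a L_sub_U by auto
  then have "x + - g \<in> U m" using hg by (intro U_rinv) (auto intro: GmonoE)
  then show False using hg J_notU by (simp add: add.assoc)
qed

lemma eta_L: assumes "x \<in> L m" shows "et x = alpha r (Suc m)"
proof -
  have "(LEAST m. \<exists>h\<in>J \<Gamma> D m. \<exists>g\<in>\<Gamma> (Suc m). x = h + g) = m"
  proof (rule Least_equality)
    show "\<exists>h\<in>J \<Gamma> D m. \<exists>g\<in>\<Gamma> (Suc m). x = h + g" using assms unfolding L_def by auto
  next
    fix y assume "\<exists>h\<in>J \<Gamma> D y. \<exists>g\<in>\<Gamma> (Suc y). x = h + g"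
    then have "x \<in> L y" unfolding L_def by auto
    then show "m \<le> y" using L_disj assms by (meson not_le)
  qed
  then show ?thesis unfolding eta_def by simp
qed

lemma alpha_range: "alpha r m \<in> {1..r}"
  using r unfolding alpha_def by auto
lemma eta_range: "et x \<in> {1..r}" unfolding eta_def by (rule alpha_range)

lemma alpha_Suc: "alpha r (Suc m) \<noteq> alpha r m"
  using r unfolding alpha_def by (auto simp: mod_Suc split: if_splits)

lemma H_U_disj: "x \<in> H m \<Longrightarrow> x \<in> U m \<Longrightarrow> False"
proof -
  assume a: "x \<in> H m" "x \<in> U m"
  then obtain h g where hg: "h \<in> J \<Gamma> D m" "g \<in> \<Gamma> m" "x = h + g" unfolding H_def by auto
  have "x + - g \<in> U m" using a hg by (intro U_rinv) auto
  then show False using hg J_notU by (simp add: add.assoc)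
qed

lemma cover: "x \<in> U m \<or> x \<in> H m"
proof -
  obtain d \<gamma> where d: "d \<in> D m" "\<gamma> \<in> \<Gamma> m" "d = x + \<gamma>" using rep by blast
  show ?thesis
  proof (cases "d \<in> U m")
    case True
    then have "d + - \<gamma> \<in> U m" using d by (intro U_rinv) auto
    then show ?thesis using d by (simp add: add.assoc)
  next
    case False
    then have "d \<in> J \<Gamma> D m" using d J_eq by auto
    then have "d + - \<gamma> \<in> H m" using d unfolding H_def by (intro CollectI bexI[of _ d] bexI[of _ "-\<gamma>"]) auto
    then show ?thesis using d by (simp add: add.assoc)
  qed
qed

lemma H_rinv: "x \<in> H m \<Longrightarrow> \<gamma> \<in> \<Gamma> m \<Longrightarrow> x + \<gamma> \<in> H m"
  unfolding H_def by (auto simp: add.assoc intro!: Gadd) (metis Gadd add.assoc)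
lemma H_linv: "x \<in> H m \<Longrightarrow> \<gamma> \<in> \<Gamma> m \<Longrightarrow> \<gamma> + x \<in> H m"
  using cover[of "\<gamma> + x" m] H_U_disj U_linv[of "\<gamma> + x" m "-\<gamma>"] by (auto simp: add.assoc[symmetric])


lemma hole:
  assumes h: "h \<in> J \<Gamma> D i" and g: "\<gamma> \<in> \<Gamma> i" "\<gamma> \<notin> \<Gamma> (Suc i)"
    and d: "d \<in> D (Suc i)" "\<gamma>' \<in> \<Gamma> (Suc i)" "d = h + \<gamma> + \<gamma>'"
  shows "d \<in> J \<Gamma> D (Suc i)"
proof -
  have g': "\<gamma>' \<in> \<Gamma> i" using d mono by auto
  have "d \<notin> U (Suc i)"
  proof
    assume "d \<in> U (Suc i)"
    then obtain j where j: "j < Suc i" "d \<in> L j" unfolding U_def by auto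
    show False
    proof (cases "j < i")
      case True
      then have "d \<in> U i" using j L_sub_U by auto
      then have "d + - (\<gamma> + \<gamma>') \<in> U i" using g g' by (intro U_rinv) auto
      moreover have "d + - (\<gamma> + \<gamma>') = h" using d by (simp add: add.assoc minus_add)
      ultimately show False using h J_notU by auto
    next
      case False
      then have "j = i" using j by auto
      then obtain h' g2 where hg: "h' \<in> J \<Gamma> D i" "g2 \<in> \<Gamma> (Suc i)" "d = h' + g2"
        using j unfolding L_def by auto
      have g2: "g2 \<in> \<Gamma> i" using hg mono by auto
      have "h' = (h' + g2) + - g2" by (simp add: add.assoc)
      also have "h' + g2 = h + \<gamma> + \<gamma>'" using d hg by simp
      finally have "h' = h + \<gamma> + \<gamma>' + - g2" .
      then have e: "- h + h' = \<gamma> + \<gamma>' + - g2" by (simp add: add.assoc)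
      have "- h + h' \<in> \<Gamma> i" unfolding e using g g' g2 by (intro Gadd) auto
      then have "h = h'" using uniq[OF J_D[OF h] J_D[OF hg(1)]] by blast
      then have "h + g2 = h + (\<gamma> + \<gamma>')" using d hg by (simp add: add.assoc)
      then have "g2 = \<gamma> + \<gamma>'" by simp
      then have "\<gamma> = g2 + - \<gamma>'" by (simp add: add.assoc)
      then have "\<gamma> \<in> \<Gamma> (Suc i)" using hg d by auto
      then show False using g by auto
    qed
  qed
  then show ?thesis using d J_eq by auto
qed

lemma J_ne: "\<exists>h. h \<in> J \<Gamma> D i"
proof (induction i)
  case 0 then show ?case using J_eq D0 by (auto simp: U_def)
next
  case (Suc i)
  then obtain h where h: "h \<in> J \<Gamma> D i" by auto
  obtain \<gamma> where g: "\<gamma> \<in> \<Gamma> i" "\<gamma> \<notin> \<Gamma> (Suc i)" using Gstrict by auto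
  obtain d \<gamma>' where d: "d \<in> D (Suc i)" "\<gamma>' \<in> \<Gamma> (Suc i)" "d = h + \<gamma> + \<gamma>'"
    using rep[of "Suc i" "h + \<gamma>"] by auto
  show ?case using hole[OF h g d] by auto
qed

lemma e_exists: assumes h: "h \<in> J \<Gamma> D n" shows "\<exists>e\<in>J \<Gamma> D (Suc n). - h + e \<in> \<Gamma> n"
proof -
  obtain \<gamma> where g: "\<gamma> \<in> \<Gamma> n" "\<gamma> \<notin> \<Gamma> (Suc n)" using Gstrict by auto
  obtain d \<gamma>' where d: "d \<in> D (Suc n)" "\<gamma>' \<in> \<Gamma> (Suc n)" "d = h + \<gamma> + \<gamma>'"
    using rep[of "Suc n" "h + \<gamma>"] by auto
  have "- h + d = \<gamma> + \<gamma>'" using d by (simp add: add.assoc)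
  moreover have "\<gamma>' \<in> \<Gamma> n" using d mono by auto
  ultimately show ?thesis using hole[OF h g d] g by (intro bexI[of _ d]) auto
qed

lemma U_eta_linv: "x \<in> U n \<Longrightarrow> \<gamma> \<in> \<Gamma> n \<Longrightarrow> et (\<gamma> + x) = et x"
proof -
  assume a: "x \<in> U n" "\<gamma> \<in> \<Gamma> n"
  then obtain j where j: "j < n" "x \<in> L j" unfolding U_def by auto
  have "\<gamma> \<in> \<Gamma> (Suc j)" using a j GmonoE by auto
  then have "\<gamma> + x \<in> L j" using L_linv j by auto
  then show ?thesis using eta_L j by auto
qed

lemma U_eta_rinv: "x \<in> U n \<Longrightarrow> \<gamma> \<in> \<Gamma> n \<Longrightarrow> et (x + \<gamma>) = et x"
proof -
  assume a: "x \<in> U n" "\<gamma> \<in> \<Gamma> n"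
  then obtain j where j: "j < n" "x \<in> L j" unfolding U_def by auto
  have "\<gamma> \<in> \<Gamma> (Suc j)" using a j GmonoE by auto
  then have "x + \<gamma> \<in> L j" using L_rinv j by auto
  then show ?thesis using eta_L j by auto
qed

lemma H_eta_nonconst:
  assumes "x \<in> H n"
  shows "\<exists>\<gamma>1\<in>\<Gamma> n. \<exists>\<gamma>2\<in>\<Gamma> n. et (\<gamma>1 + x) \<noteq> et (\<gamma>2 + x)"
proof -
  obtain h g where hg: "h \<in> J \<Gamma> D n" "g \<in> \<Gamma> n" "x = h + g" using assms unfolding H_def by auto
  obtain e where e: "e \<in> J \<Gamma> D (Suc n)" "- h + e \<in> \<Gamma> n" using e_exists hg by auto
  have 1: "h + - x \<in> \<Gamma> n"
  proof -
    have "h + - x = h + - g + - h" using hg by (simp add: minus_add add.assoc)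
    then show ?thesis using hg by simp
  qed
  have 2: "e + - x \<in> \<Gamma> n"
  proof -
    have "e + - x = h + ((- h + e) + - g) + - h" using hg by (simp add: minus_add add.assoc)
    moreover have "(- h + e) + - g \<in> \<Gamma> n" using hg e by auto
    ultimately show ?thesis by simp
  qed
  have "et (h + - x + x) = alpha r (Suc n)" using J_L hg eta_L by (simp add: add.assoc)
  moreover have "et (e + - x + x) = alpha r (Suc (Suc n))" using J_L e eta_L by (simp add: add.assoc)
  ultimately have "et (h + - x + x) \<noteq> et (e + - x + x)" using alpha_Suc[of "Suc n"] by simp
  then show ?thesis using 1 2 by blast
qed

lemma P_char: "x \<in> Per et (\<Gamma> n) a \<longleftrightarrow> x \<in> U n \<and> et x = a"
proof
  assume a: "x \<in> Per et (\<Gamma> n) a"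
  then have "et (0 + x) = a" unfolding Per_def using G0[of n] by blast
  then have "et x = a" by simp
  moreover have "x \<in> U n"
  proof (rule ccontr)
    assume "x \<notin> U n"
    then have "x \<in> H n" using cover by auto
    then obtain \<gamma>1 \<gamma>2 where "\<gamma>1 \<in> \<Gamma> n" "\<gamma>2 \<in> \<Gamma> n" "et (\<gamma>1 + x) \<noteq> et (\<gamma>2 + x)"
      using H_eta_nonconst by blast
    then show False using a unfolding Per_def by auto
  qed
  ultimately show "x \<in> U n \<and> et x = a" by auto
next
  assume "x \<in> U n \<and> et x = a"
  then show "x \<in> Per et (\<Gamma> n) a" unfolding Per_def using U_eta_linv by auto
qed

lemma U_lemma:
  assumes a: "\<forall>x\<in>U n. g + x \<in> U n \<and> et (g + x) = et x"
  shows "g \<in> \<Gamma> n"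
proof -
  have "i \<le> n \<Longrightarrow> g \<in> \<Gamma> i" for i
  proof (induction i)
    case 0
    then show ?case using G_0 by simp
  next
    case (Suc i)
    then have gi: "g \<in> \<Gamma> i" and iless: "i < n" by auto
    obtain h where h: "h \<in> J \<Gamma> D i" using J_ne by auto
    define \<gamma> where "\<gamma> = - h + g + h"
    have g1: "\<gamma> \<in> \<Gamma> i" using gi unfolding \<gamma>_def by simp
    have "\<gamma> \<in> \<Gamma> (Suc i)"
    proof (rule ccontr)
      assume g2: "\<gamma> \<notin> \<Gamma> (Suc i)"
      obtain d \<gamma>' where d: "d \<in> D (Suc i)" "\<gamma>' \<in> \<Gamma> (Suc i)" "d = h + \<gamma> + \<gamma>'"
        using rep[of "Suc i" "h + \<gamma>"] by auto
      have dJ: "d \<in> J \<Gamma> D (Suc i)" using hole[OF h g1 g2 d] .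
      have hL: "h + \<gamma>' \<in> L i" unfolding L_def using h d by auto
      then have hU: "h + \<gamma>' \<in> U n" using L_sub_U iless by auto
      have eq: "g + (h + \<gamma>') = d" using d unfolding \<gamma>_def by (simp add: add.assoc)
      have "et (g + (h + \<gamma>')) = et (h + \<gamma>')" using a hU by blast
      then have "et d = et (h + \<gamma>')" using eq by simp
      also have "\<dots> = alpha r (Suc i)" using eta_L hL by auto
      finally show False using eta_L[OF J_L[OF dJ]] alpha_Suc[of "Suc i"] by simp
    qed
    then show ?case unfolding \<gamma>_def by simp
  qed
  then show ?thesis by auto
qed


lemma D_shift:
  assumes n: "1 \<le> n" "n \<le> m" and k: "k \<in> \<Gamma> n" and h: "h \<in> D n"
  shows "k + h \<in> D m \<longleftrightarrow> k \<in> D m"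
proof (cases "m = n")
  case True
  show ?thesis
  proof
    assume a: "k + h \<in> D m"
    have "- h + (k + h) \<in> \<Gamma> n" using k by (simp add: add.assoc[symmetric])
    then have "h = k + h" using uniq[of h n "k + h"] a h True by auto
    then have "k = 0" by (metis add_0 add_right_cancel)
    then show "k \<in> D m" using Done by simp
  next
    assume a: "k \<in> D m"
    have "0 = k" using uniq[of 0 n k] a k True Done by auto
    then show "k + h \<in> D m" using h True by simp
  qed
next
  case False
  then have nm: "n < m" using n by auto
  note N = Dnested[OF n(1) nm]
  show ?thesis
  proof
    assume "k + h \<in> D m"
    then obtain v d where vd: "v \<in> D m" "v \<in> \<Gamma> n" "d \<in> D n" "k + h = v + d"
      using N by blast
    have "d = - v + (k + h)" using vd by (simp add: add.assoc[symmetric])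
    then have "- h + d = - h + (- v + k) + h" by (simp add: add.assoc)
    moreover have "- v + k \<in> \<Gamma> n" using vd k by auto
    ultimately have "- h + d \<in> \<Gamma> n" by simp
    then have "h = d" using uniq h vd by auto
    then have "v = k" using vd by simp
    then show "k \<in> D m" using vd by simp
  next
    assume "k \<in> D m"
    then show "k + h \<in> D m" using N k h by blast
  qed
qed

lemma L_char:
  assumes nm: "n \<le> m" and k: "k \<in> \<Gamma> n"
  shows "k + h \<in> L m \<longleftrightarrow> (\<exists>k'\<in>\<Gamma> n. k' + h \<in> J \<Gamma> D m \<and> - k' + k \<in> \<Gamma> (Suc m))"
proof
  assume "k + h \<in> L m"
  then obtain x \<gamma> where x: "x \<in> J \<Gamma> D m" "\<gamma> \<in> \<Gamma> (Suc m)" "k + h = x + \<gamma>" unfolding L_def by auto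
  have gn: "\<gamma> \<in> \<Gamma> n" using x nm GmonoE by auto
  have xe: "x = k + h + - \<gamma>" using x by (simp add: add.assoc)
  have "x + - h = k + (h + - \<gamma> + - h)" unfolding xe by (simp add: add.assoc)
  moreover have "h + - \<gamma> + - h \<in> \<Gamma> n" using gn by simp
  ultimately have k'n: "x + - h \<in> \<Gamma> n" using k by auto
  have "- (x + - h) + k = h + \<gamma> + - h" unfolding xe by (simp add: add.assoc minus_add)
  then have "- (x + - h) + k \<in> \<Gamma> (Suc m)" using x by simp
  moreover have "x + - h + h \<in> J \<Gamma> D m" using x by (simp add: add.assoc)
  ultimately show "\<exists>k'\<in>\<Gamma> n. k' + h \<in> J \<Gamma> D m \<and> - k' + k \<in> \<Gamma> (Suc m)" using k'n by blast
next
  assume "\<exists>k'\<in>\<Gamma> n. k' + h \<in> J \<Gamma> D m \<and> - k' + k \<in> \<Gamma> (Suc m)"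
  then obtain k' where k': "k' + h \<in> J \<Gamma> D m" "- k' + k \<in> \<Gamma> (Suc m)" by auto
  have "k + h = (k' + h) + (- h + (- k' + k) + h)" by (simp add: add.assoc)
  moreover have "- h + (- k' + k) + h \<in> \<Gamma> (Suc m)" using k' by simp
  ultimately show "k + h \<in> L m" unfolding L_def using k' by blast
qed

lemma sim_L:
  assumes n: "1 \<le> n" and h: "h \<in> J \<Gamma> D n" and h': "h' \<in> J \<Gamma> D n"
  shows "\<forall>k\<in>\<Gamma> n. (k + h \<in> L m \<longleftrightarrow> k + h' \<in> L m)"
proof (induction m rule: less_induct)
  case (less m)
  show ?case
  proof (cases "m < n")
    case True
    have "k + hh \<notin> L m" if "k \<in> \<Gamma> n" "hh \<in> J \<Gamma> D n" for k hh
    proof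
      assume "k + hh \<in> L m"
      then have "k + hh \<in> U n" using L_sub_U True by auto
      moreover have "k + hh \<in> H n" using H_linv J_H that by auto
      ultimately show False using H_U_disj by auto
    qed
    then show ?thesis using h h' by auto
  next
    case False
    then have nm: "n \<le> m" by auto
    have JJ: "k' + h \<in> J \<Gamma> D m \<longleftrightarrow> k' + h' \<in> J \<Gamma> D m" if k': "k' \<in> \<Gamma> n" for k'
    proof -
      have "k' + h \<in> D m \<longleftrightarrow> k' + h' \<in> D m"
        using D_shift[OF n nm k' J_D[OF h]] D_shift[OF n nm k' J_D[OF h']] by simp
      moreover have "k' + h \<in> U m \<longleftrightarrow> k' + h' \<in> U m"
        unfolding U_def using less k' by auto
      ultimately show ?thesis using J_eq by auto
    qed
    show ?thesis
    proof
      fix k assume k: "k \<in> \<Gamma> n"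
      show "k + h \<in> L m \<longleftrightarrow> k + h' \<in> L m"
        unfolding L_char[OF nm k, of h] L_char[OF nm k, of h'] using JJ by blast
    qed
  qed
qed

lemma sim_eta:
  assumes n: "1 \<le> n" and h: "h \<in> J \<Gamma> D n" and h': "h' \<in> J \<Gamma> D n" and k: "k \<in> \<Gamma> n"
  shows "et (k + h) = et (k + h')"
proof -
  have e: "\<And>x. et x = alpha r (Suc (LEAST m. x \<in> L m))" unfolding eta_def L_def by simp
  have "(\<lambda>m. k + h \<in> L m) = (\<lambda>m. k + h' \<in> L m)" using sim_L[OF n h h'] k by auto
  then show ?thesis unfolding e by simp
qed


abbreviation "X \<equiv> Xsp r \<Gamma> D"

lemma window:
  assumes y: "y \<in> X" and F: "finite F"
  shows "\<exists>t. \<forall>f\<in>F. y f = et (- t + f)"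
proof -
  define W0 where "W0 = Pi\<^sub>E UNIV (\<lambda>i. if i \<in> F then {y i} else UNIV)"
  have "open W0" unfolding W0_def
  proof (rule open_PiE)
    show "finite {i. (if i \<in> F then {y i} else UNIV) \<noteq> UNIV}"
      by (rule finite_subset[OF _ F]) auto
  qed (auto intro: discrete_topology_class.open_discrete)
  moreover have "y \<in> W0" unfolding W0_def by auto
  ultimately have "W0 \<inter> range (\<lambda>g. shift g et) \<noteq> {}"
    using open_Int_closure_eq_empty[of W0 "range (\<lambda>g. shift g et)"] y unfolding Xsp_def by auto
  then obtain t where "shift t et \<in> W0" by auto
  then have "\<forall>f\<in>F. shift t et f = y f" unfolding W0_def by (auto simp: PiE_iff split: if_splits)
  then show ?thesis unfolding shift_def by (intro exI[of _ t]) auto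
qed

lemma X_range: "y \<in> X \<Longrightarrow> y z \<in> {1..r}"
  using window[of y "{z}"] eta_range by auto

lemma Per_shift: "x \<in> Per (shift g z) (\<Gamma> n) a \<longleftrightarrow> - g + x \<in> Per z (\<Gamma> n) a"
proof
  assume a: "x \<in> Per (shift g z) (\<Gamma> n) a"
  show "- g + x \<in> Per z (\<Gamma> n) a" unfolding Per_def
  proof (intro CollectI ballI)
    fix \<gamma> assume "\<gamma> \<in> \<Gamma> n"
    then have "g + \<gamma> + - g \<in> \<Gamma> n" by simp
    then have "shift g z (g + \<gamma> + - g + x) = a" using a unfolding Per_def by auto
    then show "z (\<gamma> + (- g + x)) = a" unfolding shift_def by (simp add: add.assoc)
  qed
next
  assume a: "- g + x \<in> Per z (\<Gamma> n) a"
  show "x \<in> Per (shift g z) (\<Gamma> n) a" unfolding Per_def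
  proof (intro CollectI ballI)
    fix \<gamma> assume "\<gamma> \<in> \<Gamma> n"
    then have "- g + \<gamma> + g \<in> \<Gamma> n" by simp
    then have "z (- g + \<gamma> + g + (- g + x)) = a" using a unfolding Per_def by auto
    then show "shift g z (\<gamma> + x) = a" unfolding shift_def by (simp add: add.assoc)
  qed
qed

abbreviation "C n \<equiv> Cn r \<Gamma> D n"

lemma Per_C: "y \<in> C n \<Longrightarrow> a \<in> {1..r} \<Longrightarrow> x \<in> Per y (\<Gamma> n) a \<longleftrightarrow> x \<in> U n \<and> et x = a"
  unfolding Cn_def using P_char by auto

lemma C_X: "y \<in> C n \<Longrightarrow> y \<in> X" unfolding Cn_def by auto

lemma C_eta: assumes "y \<in> C n" "x \<in> U n" shows "y x = et x"
proof -
  have "x \<in> Per y (\<Gamma> n) (et x)" using Per_C[OF assms(1) eta_range] assms by auto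
  then have "y (0 + x) = et x" unfolding Per_def using G0 by blast
  then show ?thesis by simp
qed

lemma C_hole: assumes y: "y \<in> C n" and h: "h \<in> H n" shows "\<exists>\<gamma>\<in>\<Gamma> n. y (\<gamma> + h) \<noteq> y h"
proof (rule ccontr)
  assume "\<not> ?thesis"
  then have "h \<in> Per y (\<Gamma> n) (y h)" unfolding Per_def by auto
  then have "h \<in> U n" using Per_C[OF y X_range[OF C_X[OF y]]] by auto
  then show False using H_U_disj h by auto
qed


lemma J_fin: "finite (J \<Gamma> D n)" using J_eq Dfin by auto

lemma const_J:
  assumes n: "1 \<le> n" and y: "y \<in> C n" and h: "h \<in> J \<Gamma> D n" and h': "h' \<in> J \<Gamma> D n"
  shows "y h = y h'"
proof -
  have "\<forall>h\<in>J \<Gamma> D n. \<exists>\<gamma>. \<gamma> \<in> \<Gamma> n \<and> y (\<gamma> + h) \<noteq> y h"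
    using C_hole[OF y] J_H by blast
  then obtain gf where gf: "\<forall>h\<in>J \<Gamma> D n. gf h \<in> \<Gamma> n \<and> y (gf h + h) \<noteq> y h"
    using bchoice[of "J \<Gamma> D n" "\<lambda>h \<gamma>. \<gamma> \<in> \<Gamma> n \<and> y (\<gamma> + h) \<noteq> y h"] by blast
  define F where "F = D n \<union> (\<lambda>h. gf h + h) ` J \<Gamma> D n"
  have "finite F" unfolding F_def using Dfin J_fin by auto
  then obtain t where t: "\<forall>f\<in>F. y f = et (- t + f)" using window[OF C_X[OF y]] by blast
  define k where "k = - t"
  have tD: "\<And>x. x \<in> D n \<Longrightarrow> y x = et (k + x)" using t unfolding F_def k_def by auto
  have tg: "\<And>h. h \<in> J \<Gamma> D n \<Longrightarrow> y (gf h + h) = et (k + (gf h + h))" using t unfolding F_def k_def by auto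
  have a: "k + hh \<in> H n" if hh: "hh \<in> J \<Gamma> D n" for hh
  proof (rule ccontr)
    assume "k + hh \<notin> H n"
    then have U: "k + hh \<in> U n" using cover by auto
    have "k + gf hh + - k \<in> \<Gamma> n" using gf hh by simp
    then have "et ((k + gf hh + - k) + (k + hh)) = et (k + hh)" using U_eta_linv U by blast
    then have "et (k + (gf hh + hh)) = et (k + hh)" by (simp add: add.assoc)
    then show False using tg[OF hh] tD[OF J_D[OF hh]] gf hh by auto
  qed
  define f where "f x = (SOME d. d \<in> D n \<and> (\<exists>\<gamma>\<in>\<Gamma> n. d = k + x + \<gamma>))" for x
  have f: "f x \<in> D n \<and> (\<exists>\<gamma>\<in>\<Gamma> n. f x = k + x + \<gamma>)" for x
    unfolding f_def by (rule someI_ex) (use rep[of n "k + x"] in blast)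
  have inj: "inj_on f (D n)"
  proof (rule inj_onI)
    fix x x' assume x: "x \<in> D n" "x' \<in> D n" "f x = f x'"
    obtain \<gamma> \<gamma>' where g: "\<gamma> \<in> \<Gamma> n" "\<gamma>' \<in> \<Gamma> n" "f x = k + x + \<gamma>" "f x' = k + x' + \<gamma>'"
      using f[of x] f[of x'] by blast
    have "k + (x + \<gamma>) = k + (x' + \<gamma>')" using g x by (simp add: add.assoc)
    then have xe: "x + \<gamma> = x' + \<gamma>'" by simp
    have "- x' + x = - x' + (x + \<gamma>) + - \<gamma>" by (simp add: add.assoc)
    also have "\<dots> = - x' + (x' + \<gamma>') + - \<gamma>" using xe by simp
    also have "\<dots> = \<gamma>' + - \<gamma>" by simp
    finally have "- x' + x = \<gamma>' + - \<gamma>" .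
    then have "- x' + x \<in> \<Gamma> n" using g by auto
    then show "x = x'" using uniq[of x' n x] x by auto
  qed
  have fJ: "f ` J \<Gamma> D n \<subseteq> J \<Gamma> D n"
  proof
    fix z assume "z \<in> f ` J \<Gamma> D n"
    then obtain hh where hh: "hh \<in> J \<Gamma> D n" "z = f hh" by auto
    obtain \<gamma> where g: "\<gamma> \<in> \<Gamma> n" "f hh = k + hh + \<gamma>" using f by blast
    have "z \<in> H n" using H_rinv[OF a[OF hh(1)] g(1)] g hh by simp
    then have "z \<notin> U n" using H_U_disj by auto
    then show "z \<in> J \<Gamma> D n" using J_eq f hh by auto
  qed
  have fJe: "f ` J \<Gamma> D n = J \<Gamma> D n"
    by (rule endo_inj_surj[OF J_fin fJ]) (rule inj_on_subset[OF inj], use J_D in auto)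
  have c: "k + x \<in> U n \<and> et (k + x) = et x" if x: "x \<in> D n" "x \<notin> J \<Gamma> D n" for x
  proof
    show "k + x \<in> U n"
    proof (rule ccontr)
      assume "k + x \<notin> U n"
      then have kH: "k + x \<in> H n" using cover by auto
      obtain \<gamma> where g: "\<gamma> \<in> \<Gamma> n" "f x = k + x + \<gamma>" using f by blast
      have "f x \<in> H n" using H_rinv[OF kH g(1)] g by simp
      then have "f x \<in> J \<Gamma> D n" using H_U_disj J_eq f by auto
      then obtain hh where "hh \<in> J \<Gamma> D n" "f x = f hh" using fJe by (metis imageE)
      then have "x = hh" using inj x J_D by (auto dest: inj_onD)
      then show False using x \<open>hh \<in> _\<close> by auto
    qed
    have "x \<in> U n" using x J_eq by auto
    then show "et (k + x) = et x" using tD[OF x(1)] C_eta[OF y] by auto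
  qed
  have d: "\<forall>x'\<in>U n. k + x' \<in> U n \<and> et (k + x') = et x'"
  proof
    fix x' assume x': "x' \<in> U n"
    obtain x \<gamma> where x: "x \<in> D n" "\<gamma> \<in> \<Gamma> n" "x = x' + \<gamma>" using rep by blast
    have xU: "x \<in> U n" using U_rinv x x' by auto
    then have "x \<notin> J \<Gamma> D n" using J_notU by auto
    then have cx: "k + x \<in> U n" "et (k + x) = et x" using c x by auto
    have e: "k + x' = (k + x) + - \<gamma>" using x by (simp add: add.assoc)
    have "k + x' \<in> U n" unfolding e using U_rinv cx x by auto
    moreover have "et (k + x') = et x'"
      unfolding e using U_eta_rinv[OF cx(1), of "- \<gamma>"] cx x U_eta_rinv[OF x', of \<gamma>] by auto
    ultimately show "k + x' \<in> U n \<and> et (k + x') = et x'" by auto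
  qed
  have kG: "k \<in> \<Gamma> n" using U_lemma d by auto
  show ?thesis using tD[OF J_D[OF h]] tD[OF J_D[OF h']] sim_eta[OF n h h' kG] by simp
qed


definition S where "S n = {- d + d' | d d'. d \<in> D (Suc (Suc n)) \<and> d' \<in> D (Suc (Suc n))} \<inter> \<Gamma> n"

lemma S_fin: "finite (S n)"
proof -
  have "{- d + d' | d d'. d \<in> D (Suc (Suc n)) \<and> d' \<in> D (Suc (Suc n))}
      = (\<lambda>(d, d'). - d + d') ` (D (Suc (Suc n)) \<times> D (Suc (Suc n)))" by auto
  then show ?thesis unfolding S_def using Dfin by auto
qed

lemma S_hit:
  assumes w: "-w + q \<in> \<Gamma> n" and q: "\<forall>\<delta>\<in>\<Gamma> (Suc (Suc n)). q + \<delta> \<in> L m"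
  shows "\<exists>\<sigma>\<in>S n. w + \<sigma> \<in> L m"
proof -
  obtain dw gw where dw: "dw \<in> D (Suc (Suc n))" "gw \<in> \<Gamma> (Suc (Suc n))" "dw = w + gw" using rep by blast
  obtain dq gq where dq: "dq \<in> D (Suc (Suc n))" "gq \<in> \<Gamma> (Suc (Suc n))" "dq = q + gq" using rep by blast
  have gwn: "gw \<in> \<Gamma> n" and gqn: "gq \<in> \<Gamma> n" using dw dq GmonoE by auto
  have e1: "- dw + dq = - gw + (- w + q) + gq" using dw dq by (simp add: minus_add add.assoc)
  have "- dw + dq \<in> \<Gamma> n" unfolding e1 by (rule Gadd[OF Gadd[OF _ w]]) (use gwn gqn in simp_all)
  then have sS: "- dw + dq \<in> S n" unfolding S_def using dw dq by blast
  define \<delta> where "\<delta> = (- q + (w + - gw + - w) + q) + gq"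
  have "- q + (w + - gw + - w) + q \<in> \<Gamma> (Suc (Suc n))" using dw by simp
  then have dG: "\<delta> \<in> \<Gamma> (Suc (Suc n))" unfolding \<delta>_def using dq by (metis Gadd)
  have "w + (- dw + dq) = q + \<delta>" unfolding \<delta>_def e1 by (simp add: add.assoc)
  moreover have "q + \<delta> \<in> L m" using q dG by blast
  ultimately have "w + (- dw + dq) \<in> L m" by simp
  then show ?thesis using sS by blast
qed

lemma H_S:
  assumes w: "w \<in> H n"
  shows "\<exists>\<sigma>1\<in>S n. \<exists>\<sigma>2\<in>S n. et (w + \<sigma>1) \<noteq> et (w + \<sigma>2)"
proof -
  obtain h g where hg: "h \<in> J \<Gamma> D n" "g \<in> \<Gamma> n" "w = h + g" using w unfolding H_def by auto
  obtain e where e: "e \<in> J \<Gamma> D (Suc n)" "- h + e \<in> \<Gamma> n" using e_exists hg by auto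
  have w1: "- w + h \<in> \<Gamma> n" using hg by (simp add: minus_add add.assoc)
  have "- w + e = - g + (- h + e)" using hg by (simp add: minus_add add.assoc)
  then have w2: "- w + e \<in> \<Gamma> n" using hg e by (metis Gadd Gneg)
  have q1: "\<forall>\<delta>\<in>\<Gamma> (Suc (Suc n)). h + \<delta> \<in> L n"
    unfolding L_def using hg mono by blast
  have q2: "\<forall>\<delta>\<in>\<Gamma> (Suc (Suc n)). e + \<delta> \<in> L (Suc n)"
    unfolding L_def using e by blast
  obtain s1 where s1: "s1 \<in> S n" "w + s1 \<in> L n" using S_hit[OF w1 q1] by blast
  obtain s2 where s2: "s2 \<in> S n" "w + s2 \<in> L (Suc n)" using S_hit[OF w2 q2] by blast
  have "et (w + s1) \<noteq> et (w + s2)" using eta_L[OF s1(2)] eta_L[OF s2(2)] alpha_Suc[of "Suc n"] by simp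
  then show ?thesis using s1 s2 by blast
qed

lemma align:
  assumes x: "x \<in> X"
  shows "\<exists>c. \<forall>F. finite F \<longrightarrow> (\<exists>\<gamma>\<in>\<Gamma> n. \<forall>f\<in>F. x f = et (- (c + \<gamma>) + f))"
proof (rule ccontr)
  assume "\<not> ?thesis"
  then have "\<forall>c. \<exists>F. finite F \<and> (\<forall>\<gamma>\<in>\<Gamma> n. \<exists>f\<in>F. x f \<noteq> et (- (c + \<gamma>) + f))" by auto
  from choice[OF this] obtain Ff where Ff: "\<And>c. finite (Ff c) \<and> (\<forall>\<gamma>\<in>\<Gamma> n. \<exists>f\<in>Ff c. x f \<noteq> et (- (c + \<gamma>) + f))"
    by blast
  define FF where "FF = (\<Union>c\<in>D n. Ff c)"
  have "finite FF" unfolding FF_def using Dfin Ff by auto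
  then obtain t where t: "\<forall>f\<in>FF. x f = et (- t + f)" using window[OF x] by blast
  obtain c \<gamma> where c: "c \<in> D n" "\<gamma> \<in> \<Gamma> n" "c = t + \<gamma>" using rep by blast
  have "t = c + - \<gamma>" using c by (simp add: add.assoc)
  moreover have "- \<gamma> \<in> \<Gamma> n" using c by simp
  then have "\<exists>f\<in>Ff c. x f \<noteq> et (- (c + - \<gamma>) + f)" using Ff[of c] by blast
  then obtain f where "f \<in> Ff c" "x f \<noteq> et (- t + f)" using \<open>t = c + - \<gamma>\<close> by auto
  then show False using t c unfolding FF_def by auto
qed

lemma exists_v:
  assumes x: "x \<in> X" and Xinv: "\<And>g z. z \<in> X \<Longrightarrow> shift g z \<in> X"
  shows "\<exists>v\<in>D n. shift v x \<in> C n"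
proof -
  obtain c where c: "\<And>F. finite F \<Longrightarrow> (\<exists>\<gamma>\<in>\<Gamma> n. \<forall>f\<in>F. x f = et (- (c + \<gamma>) + f))"
    using align[OF x] by blast
  have tr: "- (c + \<gamma>) + z = - \<gamma> + (- c + z)" for \<gamma> z by (simp add: minus_add add.assoc)
  have perx: "z \<in> Per x (\<Gamma> n) a \<longleftrightarrow> - c + z \<in> U n \<and> et (- c + z) = a" if a: "a \<in> {1..r}" for z a
  proof
    assume "- c + z \<in> U n \<and> et (- c + z) = a"
    then have cz: "- c + z \<in> U n" "et (- c + z) = a" by auto
    show "z \<in> Per x (\<Gamma> n) a" unfolding Per_def
    proof (intro CollectI ballI)
      fix \<gamma>0 assume g0: "\<gamma>0 \<in> \<Gamma> n"
      obtain \<gamma> where g: "\<gamma> \<in> \<Gamma> n" "x (\<gamma>0 + z) = et (- (c + \<gamma>) + (\<gamma>0 + z))" using c[of "{\<gamma>0 + z}"] by auto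
      have e: "- (c + \<gamma>) + (\<gamma>0 + z) = (- \<gamma> + (- c + \<gamma>0 + c)) + (- c + z)"
        by (simp add: minus_add add.assoc)
      have "- c + \<gamma>0 + c \<in> \<Gamma> n" using g0 by simp
      then have "- \<gamma> + (- c + \<gamma>0 + c) \<in> \<Gamma> n" using g by (metis Gadd Gneg)
      then show "x (\<gamma>0 + z) = a" using g(2) unfolding e using U_eta_linv cz by auto
    qed
  next
    assume zP: "z \<in> Per x (\<Gamma> n) a"
    have xz: "x (\<gamma>0 + z) = a" if "\<gamma>0 \<in> \<Gamma> n" for \<gamma>0 using zP that unfolding Per_def by auto
    show "- c + z \<in> U n \<and> et (- c + z) = a"
    proof (cases "- c + z \<in> U n")
      case True
      obtain \<gamma> where g: "\<gamma> \<in> \<Gamma> n" "x z = et (- (c + \<gamma>) + z)" using c[of "{z}"] by auto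
      have "x z = a" using xz[of 0] by simp
      then show ?thesis using g True U_eta_linv[OF True, of "- \<gamma>"] unfolding tr by auto
    next
      case False
      then have H: "- c + z \<in> H n" using cover by auto
      obtain \<gamma> where g: "\<gamma> \<in> \<Gamma> n" "\<forall>f\<in>(\<lambda>\<sigma>. z + \<sigma>) ` S n. x f = et (- (c + \<gamma>) + f)"
        using c[of "(\<lambda>\<sigma>. z + \<sigma>) ` S n"] S_fin by auto
      define w where "w = - \<gamma> + (- c + z)"
      have wH: "w \<in> H n" unfolding w_def using H_linv[OF H] g by simp
      have "et (w + \<sigma>) = a" if s: "\<sigma> \<in> S n" for \<sigma>
      proof -
        have sn: "\<sigma> \<in> \<Gamma> n" using s unfolding S_def by auto
        have "z + \<sigma> + - z \<in> \<Gamma> n" using sn by simp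
        then have "x ((z + \<sigma> + - z) + z) = a" by (rule xz)
        then have "x (z + \<sigma>) = a" by (simp add: add.assoc)
        moreover have "x (z + \<sigma>) = et (w + \<sigma>)" using g s unfolding w_def
          by (simp add: minus_add add.assoc)
        ultimately show ?thesis by simp
      qed
      then show ?thesis using H_S[OF wH] by auto
    qed
  qed
  obtain v \<gamma>v where v: "v \<in> D n" "\<gamma>v \<in> \<Gamma> n" "v = - c + \<gamma>v" using rep by blast
  define \<delta> where "\<delta> = - c + - \<gamma>v + c"
  have dG: "\<delta> \<in> \<Gamma> n" unfolding \<delta>_def using v by simp
  have dv: "- c + (- v + z) = \<delta> + z" for z unfolding \<delta>_def v by (simp add: minus_add add.assoc)
  have "shift v x \<in> C n" unfolding Cn_def
  proof (intro CollectI conjI ballI)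
    show "shift v x \<in> X" using Xinv x by auto
    fix a assume a: "a \<in> {1..r}"
    show "Per (shift v x) (\<Gamma> n) a = Per et (\<Gamma> n) a"
    proof (intro set_eqI)
      fix z
      have "z \<in> Per (shift v x) (\<Gamma> n) a \<longleftrightarrow> \<delta> + z \<in> U n \<and> et (\<delta> + z) = a"
        unfolding Per_shift perx[OF a] dv ..
      also have "\<dots> \<longleftrightarrow> z \<in> U n \<and> et z = a"
      proof
        assume A: "\<delta> + z \<in> U n \<and> et (\<delta> + z) = a"
        have "- \<delta> + (\<delta> + z) \<in> U n" by (rule U_linv) (use A dG in auto)
        then have zU: "z \<in> U n" by simp
        then show "z \<in> U n \<and> et z = a" using A U_eta_linv dG by auto
      next
        assume "z \<in> U n \<and> et z = a"
        then show "\<delta> + z \<in> U n \<and> et (\<delta> + z) = a" using U_linv U_eta_linv dG by auto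
      qed
      also have "\<dots> \<longleftrightarrow> z \<in> Per et (\<Gamma> n) a" using P_char by auto
      finally show "z \<in> Per (shift v x) (\<Gamma> n) a \<longleftrightarrow> z \<in> Per et (\<Gamma> n) a" .
    qed
  qed
  then show ?thesis using v by auto
qed

lemma unique_v:
  assumes v: "v \<in> D n" "v' \<in> D n" and C: "shift v x \<in> C n" "shift v' x \<in> C n"
  shows "v = v'"
proof -
  define y where "y = shift v x"
  define g where "g = v' + - v"
  have sy: "shift g y = shift v' x" unfolding y_def g_def shift_add by (simp add: add.assoc)
  have "\<forall>x'\<in>U n. g + x' \<in> U n \<and> et (g + x') = et x'"
  proof
    fix x' assume x': "x' \<in> U n"
    define a where "a = et x'"
    have a: "a \<in> {1..r}" unfolding a_def by (rule eta_range)
    have "x' \<in> Per y (\<Gamma> n) a" using Per_C[OF C(1)[folded y_def] a] x' a_def by auto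
    then have "g + x' \<in> Per (shift g y) (\<Gamma> n) a" unfolding Per_shift by (simp add: add.assoc)
    then have "g + x' \<in> U n \<and> et (g + x') = a" using Per_C[OF C(2) a] sy by simp
    then show "g + x' \<in> U n \<and> et (g + x') = et x'" using a_def by simp
  qed
  then have "g \<in> \<Gamma> n" by (rule U_lemma)
  then have "- v + g + v \<in> \<Gamma> n" by simp
  then have "- v + v' \<in> \<Gamma> n" unfolding g_def by (simp add: add.assoc)
  then show ?thesis using uniq v by auto
qed


end

lemma open_coord_eq: "open {x :: 'a \<Rightarrow> nat. x p = b}"
proof -
  have "{x :: 'a \<Rightarrow> nat. x p = b} = Pi\<^sub>E UNIV (\<lambda>i. if i = p then {b} else UNIV)"
    by (auto simp: PiE_iff split: if_splits)
  moreover have "open (Pi\<^sub>E UNIV (\<lambda>i. if i = p then {b} else UNIV) :: ('a \<Rightarrow> nat) set)"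
    by (rule open_PiE) (auto intro: discrete_topology_class.open_discrete)
  ultimately show ?thesis by simp
qed

lemma pred_coord[measurable]: "(\<lambda>x :: 'a \<Rightarrow> nat. x p = b) \<in> measurable borel (count_space UNIV)"
  by (rule pred_def[THEN iffD2]) (simp add: borel_open open_coord_eq)

context toep begin

lemma B_borel:
  fixes n :: nat
  shows "{x :: 'g \<Rightarrow> nat. \<forall>a\<in>{1..r}. \<forall>z. (z \<in> Per x (\<Gamma> n) a) = (z \<in> Per et (\<Gamma> n) a)} \<in> sets borel"
  unfolding Per_def by measurable

lemma J_borel: "{x :: 'g \<Rightarrow> nat. \<forall>g\<in>J \<Gamma> D n. x g = i} \<in> sets borel"
  by measurable

lemma coord_borel: "{x :: 'g \<Rightarrow> nat. x w = i} \<in> sets borel"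
  by measurable

lemma shift0: "shift 0 z = z" unfolding shift_def by simp

lemma meas_formula:
  fixes M :: "('g \<Rightarrow> nat) measure" and n :: nat and i :: nat
  assumes n: "1 \<le> n" and M: "prob_space M" and Ms: "sets M = sets (restrict_space borel X)"
    and Minv: "\<And>g. shift g \<in> M \<rightarrow>\<^sub>M M \<and> distr M M (shift g) = M"
    and v: "v \<in> D n"
  shows "measure M (shift (- v) ` Cni r \<Gamma> D n i) * card (J \<Gamma> D n)
       = measure M {x \<in> X. x 0 = i} - card {w \<in> D n - J \<Gamma> D n. et w = i} / card (D n)"
proof -
  have spM: "space M = X" using sets_eq_imp_space_eq[OF Ms] by (simp add: space_restrict_space)
  have Xinv: "shift g z \<in> X" if "z \<in> X" for g z
    using measurable_space[OF conjunct1[OF Minv[of g]]] that spM by auto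
  have inS: "X \<inter> B \<in> sets M" if "B \<in> sets borel" for B
    unfolding Ms sets_restrict_space using that by auto
  have pe: "(Per x (\<Gamma> n) a = Per et (\<Gamma> n) a) \<longleftrightarrow> (\<forall>z. (z \<in> Per x (\<Gamma> n) a) = (z \<in> Per et (\<Gamma> n) a))" for x a
    by (rule set_eq_iff)
  have CB: "C n = X \<inter> {x :: 'g \<Rightarrow> nat. \<forall>a\<in>{1..r}. \<forall>z. (z \<in> Per x (\<Gamma> n) a) = (z \<in> Per et (\<Gamma> n) a)}"
    unfolding Cn_def pe by auto
  have CM: "C n \<in> sets M" unfolding CB by (rule inS[OF B_borel])
  have CwM: "{y \<in> C n. y w = i} \<in> sets M" for w
  proof -
    have "{y \<in> C n. y w = i} = C n \<inter> (X \<inter> {x. x w = i})" using C_X by auto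
    then show ?thesis using CM inS[OF coord_borel] by auto
  qed
  have CniM: "Cni r \<Gamma> D n i \<in> sets M"
  proof -
    have "Cni r \<Gamma> D n i = C n \<inter> (X \<inter> {x. \<forall>g\<in>J \<Gamma> D n. x g = i})" unfolding Cni_def using C_X by auto
    then show ?thesis using CM inS[OF J_borel] by auto
  qed
  have sh_img: "shift (- w) ` A = shift w -` A \<inter> space M" if "A \<subseteq> X" for A w
  proof
    show "shift (- w) ` A \<subseteq> shift w -` A \<inter> space M"
      using that Xinv spM by (auto simp: shift_add shift0)
    show "shift w -` A \<inter> space M \<subseteq> shift (- w) ` A"
    proof
      fix z assume "z \<in> shift w -` A \<inter> space M"
      then have "shift w z \<in> A" "z = shift (- w) (shift w z)" by (auto simp: shift_add shift0)
      then show "z \<in> shift (- w) ` A" by blast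
    qed
  qed
  have inv: "measure M (shift (- w) ` A) = measure M A" "shift (- w) ` A \<in> sets M"
    if "A \<in> sets M" "A \<subseteq> X" for A w
  proof -
    have m: "shift w \<in> M \<rightarrow>\<^sub>M M" using Minv by auto
    have "measure M (shift (- w) ` A) = measure (distr M M (shift w)) A"
      unfolding sh_img[OF that(2)] by (rule measure_distr[OF m that(1), symmetric])
    then show "measure M (shift (- w) ` A) = measure M A" using Minv by simp
    show "shift (- w) ` A \<in> sets M" unfolding sh_img[OF that(2)] by (rule measurable_sets[OF m that(1)])
  qed
  have disj: "disjoint_family_on (\<lambda>w. shift (- w) ` A w) (D n)" if "\<And>w. A w \<subseteq> C n" for A
    unfolding disjoint_family_on_def
  proof (intro ballI impI)
    fix w w' assume w: "w \<in> D n" "w' \<in> D n" "w \<noteq> w'"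
    show "shift (- w) ` A w \<inter> shift (- w') ` A w' = {}"
    proof (rule ccontr)
      assume "shift (- w) ` A w \<inter> shift (- w') ` A w' \<noteq> {}"
      then obtain y y' where y: "y \<in> A w" "y' \<in> A w'" "shift (- w) y = shift (- w') y'" by auto
      have "shift w (shift (- w) y) = y" "shift w' (shift (- w') y') = y'" by (auto simp: shift_add shift0)
      then have "shift w (shift (- w) y) \<in> C n" "shift w' (shift (- w) y) \<in> C n" using y that by auto
      then have "w = w'" using unique_v w by blast
      then show False using w by auto
    qed
  qed
  have sumeq: "measure M (\<Union>w\<in>D n. shift (- w) ` A w) = (\<Sum>w\<in>D n. measure M (A w))"
    if "\<And>w. A w \<subseteq> C n" "\<And>w. A w \<in> sets M" for A
  proof -
    have "measure M (\<Union>w\<in>D n. shift (- w) ` A w) = (\<Sum>w\<in>D n. measure M (shift (- w) ` A w))"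
    proof (rule measure_finite_Union[OF Dfin _ disj[OF that(1)]])
      show "(\<lambda>w. shift (- w) ` A w) ` D n \<subseteq> sets M" using inv(2) that C_X by blast
      show "emeasure M (shift (- w) ` A w) \<noteq> \<infinity>" for w
        using finite_measure.emeasure_finite[OF prob_space.axioms(1)[OF M]] by auto
    qed
    also have "\<dots> = (\<Sum>w\<in>D n. measure M (A w))"
    proof (rule sum.cong[OF refl])
      fix w have "A w \<subseteq> X" using that(1) C_X by blast
      then show "measure M (shift (- w) ` A w) = measure M (A w)" using inv(1) that(2) by blast
    qed
    finally show ?thesis .
  qed
  have coverX: "X = (\<Union>w\<in>D n. shift (- w) ` C n)"
  proof
    show "X \<subseteq> (\<Union>w\<in>D n. shift (- w) ` C n)"
    proof
      fix z assume z: "z \<in> X"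
      obtain w where w: "w \<in> D n" "shift w z \<in> C n" using exists_v[OF z Xinv] by blast
      have "z = shift (- w) (shift w z)" by (simp add: shift_add shift0)
      then show "z \<in> (\<Union>w\<in>D n. shift (- w) ` C n)" using w by blast
    qed
    show "(\<Union>w\<in>D n. shift (- w) ` C n) \<subseteq> X" using Xinv C_X by blast
  qed
  have coveri: "{x \<in> X. x 0 = i} = (\<Union>w\<in>D n. shift (- w) ` {y \<in> C n. y w = i})"
  proof
    show "{x \<in> X. x 0 = i} \<subseteq> (\<Union>w\<in>D n. shift (- w) ` {y \<in> C n. y w = i})"
    proof
      fix z assume z: "z \<in> {x \<in> X. x 0 = i}"
      obtain w where w: "w \<in> D n" "shift w z \<in> C n" using exists_v[of z, OF _ Xinv] z by blast
      have "z = shift (- w) (shift w z)" by (simp add: shift_add shift0)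
      moreover have "shift w z w = i" using z unfolding shift_def by simp
      ultimately show "z \<in> (\<Union>w\<in>D n. shift (- w) ` {y \<in> C n. y w = i})" using w by blast
    qed
    show "(\<Union>w\<in>D n. shift (- w) ` {y \<in> C n. y w = i}) \<subseteq> {x \<in> X. x 0 = i}"
    proof
      fix z assume "z \<in> (\<Union>w\<in>D n. shift (- w) ` {y \<in> C n. y w = i})"
      then obtain w y where wy: "w \<in> D n" "y \<in> C n" "y w = i" "z = shift (- w) y" by auto
      have "z \<in> X" using Xinv[OF C_X[OF wy(2)]] wy by simp
      moreover have "z 0 = i" using wy unfolding shift_def by simp
      ultimately show "z \<in> {x \<in> X. x 0 = i}" by simp
    qed
  qed
  define c where "c = measure M (C n)"
  define q where "q = measure M (Cni r \<Gamma> D n i)"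
  have "1 = measure M X" using prob_space.prob_space[OF M] spM by simp
  also have "\<dots> = (\<Sum>w\<in>D n. c)" unfolding c_def using sumeq[of "\<lambda>_. C n"] coverX CM by simp
  finally have c1: "1 = real (card (D n)) * c" by simp
  have cD: "card (D n) > 0" using Dfin Done card_gt_0_iff by blast
  have cval: "c = 1 / card (D n)" using c1 cD by (simp add: field_simps)
  have piece: "measure M {y \<in> C n. y w = i} = (if w \<in> J \<Gamma> D n then q else if et w = i then c else 0)"
    if w: "w \<in> D n" for w
  proof (cases "w \<in> J \<Gamma> D n")
    case True
    have "{y \<in> C n. y w = i} = Cni r \<Gamma> D n i" unfolding Cni_def using const_J[OF n _ _ True] True by (auto; metis)
    then show ?thesis using True q_def by simp
  next
    case False
    then have wU: "w \<in> U n" using J_eq w by auto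
    have "{y \<in> C n. y w = i} = (if et w = i then C n else {})" using C_eta[OF _ wU] by auto
    then show ?thesis using False c_def by simp
  qed
  have "measure M {x \<in> X. x 0 = i} = (\<Sum>w\<in>D n. measure M {y \<in> C n. y w = i})"
    unfolding coveri by (rule sumeq) (use CwM in auto)
  also have "\<dots> = (\<Sum>w\<in>D n. (if w \<in> J \<Gamma> D n then q else if et w = i then c else 0))"
    using piece by simp
  also have "\<dots> = (\<Sum>w\<in>J \<Gamma> D n. q) + (\<Sum>w\<in>D n - J \<Gamma> D n. (if et w = i then c else 0))"
  proof -
    have JD: "J \<Gamma> D n \<subseteq> D n" using J_D by auto
    have "(\<Sum>w\<in>D n. (if w \<in> J \<Gamma> D n then q else if et w = i then c else 0))
      = (\<Sum>w\<in>D n - J \<Gamma> D n. (if w \<in> J \<Gamma> D n then q else if et w = i then c else 0))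
        + (\<Sum>w\<in>J \<Gamma> D n. (if w \<in> J \<Gamma> D n then q else if et w = i then c else 0))"
      by (rule sum.subset_diff[OF JD Dfin])
    then show ?thesis by simp
  qed
  also have "(\<Sum>w\<in>D n - J \<Gamma> D n. (if et w = i then c else 0)) = card {w \<in> D n - J \<Gamma> D n. et w = i} * c"
  proof -
    have "(\<Sum>w\<in>D n - J \<Gamma> D n. (if et w = i then c else 0)) = (\<Sum>w\<in>{w \<in> D n - J \<Gamma> D n. et w = i}. c)"
      using sum.inter_filter[of "D n - J \<Gamma> D n" "\<lambda>_. c" "\<lambda>w. et w = i"] Dfin by simp
    then show ?thesis by simp
  qed
  finally have "measure M {x \<in> X. x 0 = i} = card (J \<Gamma> D n) * q + card {w \<in> D n - J \<Gamma> D n. et w = i} * c"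
    by simp
  moreover have "measure M (shift (- v) ` Cni r \<Gamma> D n i) = q"
    unfolding q_def by (rule inv(1)[OF CniM]) (auto simp: Cni_def Cn_def)
  ultimately show ?thesis unfolding cval by (simp add: field_simps)
qed


end

theorem lemma4p13:
  fixes r :: nat
    and \<Gamma> D :: "nat \<Rightarrow> 'g::{group_add, countable} set"
    and \<mu> \<nu> :: "('g \<Rightarrow> nat) measure"
  assumes r: "r > 1"
    and Gamma0: "\<Gamma> 0 = UNIV"
    and Gamma_normal: "\<And>i. i \<ge> 1 \<Longrightarrow> normal_subgroup_add (\<Gamma> i)"
    and Gamma_fin_index: "\<And>i. i \<ge> 1 \<Longrightarrow> finite {lcoset g (\<Gamma> i) | g. True}"
    and Gamma_strict: "\<And>i. i \<ge> 1 \<Longrightarrow> \<Gamma> (Suc i) \<subset> \<Gamma> i"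
    and Gamma_inter: "(\<Inter>i\<in>{1..}. \<Gamma> i) = {0}"
    and index_G: "\<And>i. i \<ge> 1 \<Longrightarrow> sub_index UNIV (\<Gamma> i) \<ge> 3"
    and index_step: "\<And>i. i \<ge> 1 \<Longrightarrow> sub_index (\<Gamma> i) (\<Gamma> (Suc i)) \<ge> 3"
    and D0: "D 0 = {0}"
    and D_fin: "\<And>i. finite (D i)"
    and D_transversal: "\<And>i g. \<exists>!d. d \<in> D i \<and> d \<in> lcoset g (\<Gamma> i)"
    and D_one: "\<And>i. 0 \<in> D i"
    and D_mono: "\<And>i. D i \<subseteq> D (Suc i)"
    and D_cover: "(\<Union>i. D i) = UNIV"
    and D_nested: "\<And>i j. 1 \<le> i \<Longrightarrow> i < j \<Longrightarrow>
                      D j = (\<Union>v\<in>D j \<inter> \<Gamma> i. (\<lambda>d. v + d) ` D i)"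
    and mu_prob: "prob_space \<mu>"
    and mu_sets: "sets \<mu> = sets (restrict_space borel (Xsp r \<Gamma> D))"
    and mu_inv: "\<And>g. shift g \<in> \<mu> \<rightarrow>\<^sub>M \<mu> \<and> distr \<mu> \<mu> (shift g) = \<mu>"
    and nu_prob: "prob_space \<nu>"
    and nu_sets: "sets \<nu> = sets (restrict_space borel (Xsp r \<Gamma> D))"
    and nu_inv: "\<And>g. shift g \<in> \<nu> \<rightarrow>\<^sub>M \<nu> \<and> distr \<nu> \<nu> (shift g) = \<nu>"
    and p_eq: "\<And>i. i \<in> {1..r} \<Longrightarrow>
                 measure \<mu> {x \<in> Xsp r \<Gamma> D. x 0 = i} = measure \<nu> {x \<in> Xsp r \<Gamma> D. x 0 = i}"
  shows "\<forall>n\<ge>1. \<forall>A\<in>Pn r \<Gamma> D n. measure \<mu> A = measure \<nu> A"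
proof -
  have sg: "subgroup_add (\<Gamma> i)" for i
  proof (cases "i = 0")
    case True then show ?thesis using Gamma0 by (simp add: subgroup_add_def)
  next
    case False then show ?thesis using Gamma_normal[of i] by (simp add: normal_subgroup_add_def)
  qed
  have nrm: "g + h + - g \<in> \<Gamma> i" if "h \<in> \<Gamma> i" for i g h
  proof (cases "i = 0")
    case True then show ?thesis using Gamma0 by simp
  next
    case False then show ?thesis using Gamma_normal[of i] that by (simp add: normal_subgroup_add_def)
  qed
  have mono: "\<Gamma> (Suc i) \<subseteq> \<Gamma> i" for i
  proof (cases "i = 0")
    case True then show ?thesis using Gamma0 by simp
  next
    case False then show ?thesis using Gamma_strict[of i] by auto
  qed
  have strict: "\<Gamma> (Suc i) \<noteq> \<Gamma> i" for i
  proof (cases "i = 0")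
    case True
    show ?thesis
    proof
      assume "\<Gamma> (Suc i) = \<Gamma> i"
      then have G1: "\<Gamma> 1 = UNIV" using True Gamma0 by simp
      have "lcoset g UNIV = UNIV" for g :: 'g
        unfolding lcoset_def by (metis UNIV_eq_I add_minus_cancel rangeI)
      then have "{lcoset g (\<Gamma> 1) |g. g \<in> UNIV} = {UNIV}" unfolding G1 by auto
      then have "sub_index UNIV (\<Gamma> 1) = 1" unfolding sub_index_def by simp
      then show False using index_G[of 1] by simp
    qed
  next
    case False then show ?thesis using Gamma_strict[of i] by auto
  qed
  interpret T: toep r \<Gamma> D
    by (rule toep.intro) (use r sg nrm Gamma0 mono strict D0 D_fin D_transversal D_one D_nested in auto)
  show ?thesis
  proof (intro allI impI ballI)
    fix n A assume n: "1 \<le> n" and A: "A \<in> Pn r \<Gamma> D n"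
    then obtain i v where iv: "i \<in> {1..r}" "v \<in> D n" "A = shift (- v) ` Cni r \<Gamma> D n i"
      unfolding Pn_def by auto
    have "measure \<mu> A * card (J \<Gamma> D n) = measure \<nu> A * card (J \<Gamma> D n)"
      using T.meas_formula[OF n mu_prob mu_sets mu_inv iv(2), of i]
        T.meas_formula[OF n nu_prob nu_sets nu_inv iv(2), of i] p_eq[OF iv(1)] iv(3) by simp
    moreover have "card (J \<Gamma> D n) > 0" using T.J_ne T.J_fin card_gt_0_iff by blast
    ultimately show "measure \<mu> A = measure \<nu> A" by simp
  qed
qed

end
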